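(* Let $n\ge 1$, $p\ge 0$ be integers and let $S\subseteq\mathbb{R}^n\times\mathbb{R}^p$ be permutation-invariant with respect to $x$. Let $S_0=S\cap\{(u,z)\in\mathbb{R}^n\times\mathbb{R}^p\mid u_1\ge u_2\ge\dots\ge u_n\}$. Then $$\mathrm{conv}(S)=\{(x,z)\in\mathbb{R}^n\times\mathbb{R}^p\mid \exists u\in\mathbb{R}^n \text{ such that } (u,z)\in\mathrm{conv}(S_0) \text{ and } u\ge_m x\}.$$
   Context: A set $S\subseteq\mathbb{R}^n\times\mathbb{R}^p$ is permutation-invariant with respect to $x$ if $(x,z)\in S$ implies $(Px,z)\in S$ for every $n\times n$ permutation matrix $P$. For $x\in\mathbb{R}^n$, $x_{[i]}$ denotes the $i$-th largest component of $x$. For $x,y\in\mathbb{R}^n$, $x\ge_m y$ ($x$ majorizes $y$) means $\sum_{i=1}^j x_{[i]}\ge\sum_{i=1}^j y_{[i]}$ for $j=1,\dots,n-1$ and $\sum_{i=1}^n x_{[i]}=\sum_{i=1}^n y_{[i]}$. $\mathrm{conv}$ denotes convex hull. *)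

theory Defs
  imports "HOL-Analysis.Analysis" "HOL-Library.Multiset"
begin

definition perm_matrix :: "('n::finite \<Rightarrow> 'n) \<Rightarrow> real^'n^'n" where
  "perm_matrix \<sigma> = (\<chi> i j. if \<sigma> i = j then 1 else 0)"

definition is_perm_matrix :: "real^'n^'n::finite \<Rightarrow> bool" where
  "is_perm_matrix P \<longleftrightarrow> (\<exists>\<sigma>. \<sigma> permutes (UNIV::'n set) \<and> P = perm_matrix \<sigma>)"

definition perm_invariant_x :: "((real^'n::finite) \<times> 'b) set \<Rightarrow> bool" where
  "perm_invariant_x S \<longleftrightarrow>
     (\<forall>x z P. (x, z) \<in> S \<and> is_perm_matrix P \<longrightarrow> (P *v x, z) \<in> S)"

text \<open>Components of x in decreasing order: (decr x) ! (i-1) is x_[i].\<close>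
definition decr :: "real^'n::finite \<Rightarrow> real list" where
  "decr x = rev (sorted_list_of_multiset (image_mset (\<lambda>i. x $ i) (mset_set (UNIV::'n set))))"

definition largest :: "real^'n::finite \<Rightarrow> nat \<Rightarrow> real" where
  "largest x i = decr x ! (i - 1)"

definition majorizes :: "real^'n::finite \<Rightarrow> real^'n \<Rightarrow> bool" where
  "majorizes x y \<longleftrightarrow>
     (\<forall>j\<in>{1..<CARD('n)}. (\<Sum>i=1..j. largest x i) \<ge> (\<Sum>i=1..j. largest y i)) \<and>
     (\<Sum>i=1..CARD('n). largest x i) = (\<Sum>i=1..CARD('n). largest y i)"

end

theory Submission
  imports Defs "HOL-Combinatorics.Permutations"
begin

abbreviation sl :: "'n::{finite,linorder} list" where
  "sl \<equiv> sorted_list_of_set (UNIV::'n set)"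

lemma sl_len: "length (sl::'n::{finite,linorder} list) = CARD('n)"
  by (simp add: length_sorted_list_of_set)
lemma sl_dist: "distinct (sl::'n::{finite,linorder} list)"
  by simp
lemma sl_set: "set (sl::'n::{finite,linorder} list) = UNIV"
  by simp
lemma sl_strict: "k < l \<Longrightarrow> l < CARD('n) \<Longrightarrow> (sl::'n::{finite,linorder} list) ! k < sl ! l"
  using strict_sorted_list_of_set[of "UNIV::'n set"] sl_len
  by (metis sorted_wrt_nth_less)
lemma sl_bij: "bij_betw ((!) (sl::'n::{finite,linorder} list)) {..<CARD('n)} UNIV"
  by (rule bij_betw_nth) (auto simp: sl_len)

definition ie :: "'n::{finite,linorder} \<Rightarrow> nat" where
  "ie = inv_into {..<CARD('n)} ((!) sl)"

lemma ie_bij: "bij_betw (ie::'n::{finite,linorder} \<Rightarrow> nat) UNIV {..<CARD('n)}"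
  unfolding ie_def by (rule bij_betw_inv_into[OF sl_bij])
lemma ie_lt: "ie (i::'n::{finite,linorder}) < CARD('n)"
  using ie_bij bij_betwE by blast
lemma sl_ie: "(sl::'n::{finite,linorder} list) ! ie i = i"
  unfolding ie_def using sl_bij by (metis UNIV_I bij_betw_inv_into_right)
lemma ie_mono: "(i::'n::{finite,linorder}) \<le> j \<Longrightarrow> ie i \<le> ie j"
proof (rule ccontr)
  assume "i \<le> j" "\<not> ie i \<le> ie j"
  then have "sl ! ie j < (sl::'n list) ! ie i" using sl_strict ie_lt by (metis not_le)
  then show False using \<open>i \<le> j\<close> by (simp add: sl_ie)
qed

lemma perm_mult: "perm_matrix \<sigma> *v x = (\<chi> i. x $ \<sigma> i)"
  unfolding perm_matrix_def
  by (simp add: matrix_vector_mult_def vec_eq_iff if_distrib[of "\<lambda>t. t * _"] cong: if_cong)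

lemma decr_perm:
  assumes "\<pi> permutes (UNIV::'n::finite set)"
  shows "decr (\<chi> i. x $ \<pi> i) = decr (x::real^'n)"
proof -
  have "image_mset \<pi> (mset_set UNIV) = mset_set (UNIV::'n set)"
    using assms by (simp add: image_mset_mset_set permutes_inj permutes_image)
  moreover have "image_mset (\<lambda>i. x $ \<pi> i) (mset_set UNIV) = image_mset (\<lambda>i. x $ i) (image_mset \<pi> (mset_set (UNIV::'n set)))"
    by (simp add: image_mset.compositionality comp_def)
  ultimately have "image_mset (\<lambda>i. x $ \<pi> i) (mset_set UNIV) = image_mset (\<lambda>i. x $ i) (mset_set (UNIV::'n set))"
    by simp
  moreover have "image_mset (($) (\<chi> i. x $ \<pi> i)) (mset_set UNIV) = image_mset (\<lambda>i. x $ \<pi> i) (mset_set UNIV)"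
    by (rule image_mset_cong) simp
  ultimately show ?thesis unfolding decr_def by simp
qed

lemma sort_exists:
  fixes x :: "real^'n::{finite,linorder}"
  shows "\<exists>\<pi>. \<pi> permutes (UNIV::'n set) \<and> (\<forall>i j. i \<le> j \<longrightarrow> x $ \<pi> j \<le> x $ \<pi> i)"
proof -
  define ys where "ys = sort_key (\<lambda>i. - x $ i) (sl::'n list)"
  have d: "distinct ys" unfolding ys_def by simp
  have st: "set ys = UNIV" unfolding ys_def by simp
  have ln: "length ys = CARD('n)" unfolding ys_def by (simp add: sl_len)
  have so: "sorted (map (\<lambda>i. - x $ i) ys)" unfolding ys_def by (rule sorted_sort_key)
  define \<pi> where "\<pi> i = ys ! ie (i::'n)" for i
  have b: "bij_betw ((!) ys) {..<CARD('n)} UNIV" by (rule bij_betw_nth) (use d st ln in auto)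
  have "bij_betw \<pi> UNIV UNIV" unfolding \<pi>_def
    using bij_betw_trans[OF ie_bij[where 'n='n] b] by (simp add: comp_def)
  then have p: "\<pi> permutes UNIV" by (auto intro: bij_imp_permutes)
  have "x $ \<pi> j \<le> x $ \<pi> i" if "i \<le> j" for i j
  proof -
    have "map (\<lambda>i. - x $ i) ys ! ie i \<le> map (\<lambda>i. - x $ i) ys ! ie j"
      using sorted_nth_mono[OF so] ie_mono[OF that] ie_lt[of j] ln by simp
    then show ?thesis using ie_lt[of i] ie_lt[of j] ln by (simp add: \<pi>_def)
  qed
  with p show ?thesis by blast
qed

lemma decr_sorted:
  fixes v :: "real^'n::{finite,linorder}"
  assumes "\<forall>i j. i \<le> j \<longrightarrow> v $ j \<le> v $ i"
  shows "decr v = map (\<lambda>i. v $ i) sl"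
proof -
  have m: "mset_set (UNIV::'n set) = mset sl"
    by (metis mset_set_set sl_dist sl_set)
  have "sorted_wrt (\<lambda>a b. v $ b \<le> v $ a) (sl::'n list)"
    using sorted_sorted_list_of_set[of "UNIV::'n set"] assms
    by (metis (no_types, lifting) sorted_wrt_mono_rel)
  then have s: "sorted (rev (map (\<lambda>i. v $ i) (sl::'n list)))"
    by (simp add: sorted_wrt_map sorted_wrt_rev)
  have e: "image_mset (\<lambda>i. v $ i) (mset_set UNIV) = mset (rev (map (\<lambda>i. v $ i) (sl::'n list)))"
    by (simp add: m)
  have "sorted_list_of_multiset (image_mset (\<lambda>i. v $ i) (mset_set UNIV)) = rev (map (\<lambda>i. v $ i) (sl::'n list))"
    by (simp only: e sorted_list_of_multiset_mset sorted_sort_id[OF s])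
  then show ?thesis unfolding decr_def by simp
qed

lemma sum_shift1: "(\<Sum>i=1..(j::nat). f (i - 1)) = (\<Sum>k<j. (f k :: real))"
  by (induction j) auto

lemma sort_bij:
  fixes x :: "real^'n::{finite,linorder}"
  shows "\<exists>g. bij_betw g {..<CARD('n)} (UNIV::'n set) \<and>
     (\<forall>j\<le>CARD('n). (\<Sum>i=1..j. largest x i) = (\<Sum>k<j. x $ g k)) \<and>
     (\<forall>k l. k \<le> l \<longrightarrow> l < CARD('n) \<longrightarrow> x $ g l \<le> x $ g k)"
proof -
  obtain \<pi> where p: "\<pi> permutes (UNIV::'n set)" and m: "\<forall>i j. i \<le> j \<longrightarrow> x $ \<pi> j \<le> x $ \<pi> i"
    using sort_exists by blast
  define v where "v = (\<chi> i. x $ \<pi> i)"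
  have dv: "decr x = map (\<lambda>i. v $ i) sl"
    using decr_perm[OF p, of x] decr_sorted[of v] m unfolding v_def by simp
  define g where "g = (\<lambda>k. \<pi> ((sl::'n list) ! k))"
  have bg: "bij_betw g {..<CARD('n)} UNIV"
    using bij_betw_trans[OF sl_bij[where 'n='n] permutes_imp_bij[OF p]] by (simp add: g_def comp_def)
  have lg: "largest x i = x $ g (i - 1)" if "1 \<le> i" "i \<le> CARD('n)" for i
    using that by (simp add: largest_def dv sl_len v_def g_def)
  have "(\<Sum>i=1..j. largest x i) = (\<Sum>k<j. x $ g k)" if "j \<le> CARD('n)" for j
  proof -
    have "(\<Sum>i=1..j. largest x i) = (\<Sum>i=1..j. x $ g (i - 1))"
      by (rule sum.cong) (use that lg in auto)
    then show ?thesis using sum_shift1[of "\<lambda>k. x $ g k" j] by simp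
  qed
  moreover have "x $ g l \<le> x $ g k" if "k \<le> l" "l < CARD('n)" for k l
  proof -
    have "(sl::'n list) ! k \<le> sl ! l"
      using that sl_strict[where 'n='n, of k l] by (cases "k = l") auto
    then show ?thesis using m by (simp add: g_def)
  qed
  ultimately show ?thesis using bg by blast
qed

lemma exch:
  fixes y :: "nat \<Rightarrow> real"
  assumes mono: "\<forall>k l. k \<le> l \<longrightarrow> l < n \<longrightarrow> y l \<le> y k" and J: "J \<subseteq> {..<n}" and c: "card J = j"
  shows "sum y J \<le> sum y {..<j}"
proof (cases "j = 0")
  case True
  then have "J = {}" using c J finite_subset by (metis card_eq_0_iff finite_lessThan)
  then show ?thesis using True by simp
next
  case False
  have fJ: "finite J" using J finite_subset by blast
  have jn: "j \<le> n" using c J card_mono[of "{..<n}" J] by simp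
  define A where "A = J - {..<j}"
  define B where "B = {..<j} - J"
  define C where "C = J \<inter> {..<j}"
  have cA: "card A = card B"
  proof -
    have "card A = card J - card C" unfolding A_def C_def
      by (metis Diff_Int card_Diff_subset_Int fJ finite_Int Int_lower2 inf_commute Diff_Int2 card_Diff_subset finite_lessThan Int_lower1 finite_subset)
    moreover have "card B = j - card C" unfolding B_def C_def
      by (metis card_Diff_subset_Int card_lessThan fJ finite_Int inf_commute)
    ultimately show ?thesis using c by simp
  qed
  have s1: "sum y J = sum y C + sum y A" unfolding A_def C_def
    using fJ by (metis Diff_Int2 Int_Diff_Un Int_Diff_disjoint Un_commute finite_Diff finite_Int sum.union_disjoint inf_commute sum.Int_Diff)
  have s2: "sum y {..<j} = sum y C + sum y B" unfolding B_def C_def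
    by (metis inf_commute sum.Int_Diff finite_lessThan)
  have "sum y A \<le> of_nat (card A) * y (j - 1)"
  proof (rule sum_bounded_above)
    fix k assume "k \<in> A"
    then have "j - 1 \<le> k" "k < n" using A_def J by auto
    then show "y k \<le> y (j - 1)" using mono by blast
  qed
  moreover have "of_nat (card B) * y (j - 1) \<le> sum y B"
  proof (rule sum_bounded_below)
    fix k assume "k \<in> B"
    then have "k \<le> j - 1" "j - 1 < n" using B_def False jn by auto
    then show "y (j - 1) \<le> y k" using mono by blast
  qed
  ultimately have "sum y A \<le> sum y B" using cA by (metis order_trans)
  then show ?thesis using s1 s2 by linarith
qed

lemma topsum_bound:
  fixes x :: "real^'n::{finite,linorder}"
  assumes "card I = j"
  shows "(\<Sum>i\<in>I. x $ i) \<le> (\<Sum>i=1..j. largest x i)"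
proof -
  obtain g where bg: "bij_betw g {..<CARD('n)} (UNIV::'n set)"
    and T: "\<forall>j\<le>CARD('n). (\<Sum>i=1..j. largest x i) = (\<Sum>k<j. x $ g k)"
    and m: "\<forall>k l. k \<le> l \<longrightarrow> l < CARD('n) \<longrightarrow> x $ g l \<le> x $ g k"
    using sort_bij by blast
  define J where "J = {k \<in> {..<CARD('n)}. g k \<in> I}"
  have IJ: "I = g ` J" using bg unfolding J_def bij_betw_def by auto
  have inj: "inj_on g J" using bg unfolding J_def bij_betw_def by (auto intro: inj_on_subset)
  have cJ: "card J = j" using assms IJ inj card_image by metis
  have jn: "j \<le> CARD('n)" using assms card_mono[of UNIV I] by simp
  have "(\<Sum>i\<in>I. x $ i) = (\<Sum>k\<in>J. x $ g k)" using IJ inj sum.reindex by (metis (no_types, lifting) comp_apply sum.cong)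
  also have "\<dots> \<le> (\<Sum>k<j. x $ g k)"
    by (rule exch[OF _ _ cJ, of "CARD('n)"]) (use m J_def in auto)
  finally show ?thesis using T jn by simp
qed

lemma topsum_total:
  fixes x :: "real^'n::{finite,linorder}"
  shows "(\<Sum>i=1..CARD('n). largest x i) = (\<Sum>i\<in>UNIV. x $ i)"
proof -
  obtain g where bg: "bij_betw g {..<CARD('n)} (UNIV::'n set)"
    and T: "\<forall>j\<le>CARD('n). (\<Sum>i=1..j. largest x i) = (\<Sum>k<j. x $ g k)"
    using sort_bij by blast
  have "(\<Sum>i\<in>UNIV. x $ i) = (\<Sum>k<CARD('n). x $ g k)"
    using sum.reindex_bij_betw[OF bg, of "\<lambda>i. x $ i"] by simp
  then show ?thesis using T by simp
qed

lemma abel: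
  fixes d a b :: "nat \<Rightarrow> real"
  assumes dm: "\<forall>k l. k \<le> l \<longrightarrow> d l \<le> d k"
    and ps: "\<forall>m\<le>n. (\<Sum>k<m. a k) \<le> (\<Sum>k<m. b k)"
    and tot: "(\<Sum>k<n. a k) = (\<Sum>k<n. b k)"
  shows "(\<Sum>k<n. d k * a k) \<le> (\<Sum>k<n. d k * b k)"
proof -
  have "m \<le> n \<longrightarrow> (\<Sum>k<m. d k * (a k - b k)) \<le> d m * (\<Sum>k<m. (a k - b k))" for m
  proof (induction m)
    case 0
    then show ?case by simp
  next
    case (Suc m)
    show ?case
    proof
      assume sm: "Suc m \<le> n"
      have IH: "(\<Sum>k<m. d k * (a k - b k)) \<le> d m * (\<Sum>k<m. (a k - b k))" using Suc sm by simp
      have E: "(\<Sum>k<Suc m. (a k - b k)) \<le> 0" using ps[rule_format, OF sm] by (simp add: sum_subtractf)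
      have "(\<Sum>k<Suc m. d k * (a k - b k)) \<le> d m * (\<Sum>k<Suc m. (a k - b k))"
        using IH by (simp add: distrib_left)
      also have "\<dots> \<le> d (Suc m) * (\<Sum>k<Suc m. (a k - b k))"
      proof -
        have "0 \<le> d m - d (Suc m)" using dm by (simp add: le_Suc_eq)
        then have "(d m - d (Suc m)) * (\<Sum>k<Suc m. (a k - b k)) \<le> 0"
          using E mult_nonneg_nonpos by blast
        then show ?thesis by (simp add: algebra_simps)
      qed
      finally show "(\<Sum>k<Suc m. d k * (a k - b k)) \<le> d (Suc m) * (\<Sum>k<Suc m. (a k - b k))" .
    qed
  qed
  then have "(\<Sum>k<n. d k * (a k - b k)) \<le> d n * (\<Sum>k<n. (a k - b k))" by blast
  also have "\<dots> = 0" using tot by (simp add: sum_subtractf)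
  finally show ?thesis by (simp add: right_diff_distrib sum_subtractf)
qed

lemma rado:
  fixes u x :: "real^'n::{finite,linorder}"
  assumes maj: "majorizes u x"
  shows "x \<in> convex hull ((\<lambda>\<pi>. \<chi> i. u $ \<pi> i) ` {\<pi>. \<pi> permutes (UNIV::'n set)})"
proof (rule ccontr)
  define P where "P = (\<lambda>\<pi>. \<chi> i. u $ \<pi> i) ` {\<pi>. \<pi> permutes (UNIV::'n set)}"
  assume nx: "x \<notin> convex hull ((\<lambda>\<pi>. \<chi> i. u $ \<pi> i) ` {\<pi>. \<pi> permutes (UNIV::'n set)})"
  have fP: "finite P" unfolding P_def using finite_permutations[of "UNIV::'n set"] by simp
  have "closed (convex hull P)" using fP by (simp add: compact_imp_closed finite_imp_compact compact_convex_hull)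
  then obtain a b where ab: "inner a x < b" "\<forall>p\<in>convex hull P. b < inner a p"
    using separating_hyperplane_closed_point[OF convex_convex_hull _ nx[folded P_def]] by blast
  define c where "c = - a"
  have cP: "inner c p < inner c x" if "p \<in> P" for p
    using ab hull_subset[of P] that unfolding c_def by force
  define n where "n = CARD('n)"
  have n0: "0 < n" unfolding n_def by simp
  obtain gc where bc: "bij_betw gc {..<n} (UNIV::'n set)"
    and Tc: "\<forall>j\<le>n. (\<Sum>i=1..j. largest c i) = (\<Sum>k<j. c $ gc k)"
    and mc: "\<forall>k l. k \<le> l \<longrightarrow> l < n \<longrightarrow> c $ gc l \<le> c $ gc k"
    using sort_bij[of c] unfolding n_def by blast
  obtain gu where bu: "bij_betw gu {..<n} (UNIV::'n set)"
    and Tu: "\<forall>j\<le>n. (\<Sum>i=1..j. largest u i) = (\<Sum>k<j. u $ gu k)"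
    using sort_bij[of u] unfolding n_def by blast
  define \<pi> where "\<pi> = gu \<circ> inv_into {..<n} gc"
  have bp: "bij_betw \<pi> UNIV UNIV" unfolding \<pi>_def
    by (rule bij_betw_trans[OF bij_betw_inv_into[OF bc] bu])
  then have pp: "\<pi> permutes UNIV" by (auto intro: bij_imp_permutes)
  define p where "p = (\<chi> i. u $ \<pi> i)"
  have "p \<in> P" unfolding P_def p_def using pp by blast
  then have lt: "inner c p < inner c x" by (rule cP)
  have ip: "inner c p = (\<Sum>k<n. c $ gc k * u $ gu k)"
  proof -
    have "inner c p = (\<Sum>i\<in>UNIV. c $ i * u $ \<pi> i)" by (simp add: inner_vec_def p_def)
    also have "\<dots> = (\<Sum>k<n. c $ gc k * u $ \<pi> (gc k))"
      using sum.reindex_bij_betw[OF bc, of "\<lambda>i. c $ i * u $ \<pi> i"] by simp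
    also have "\<dots> = (\<Sum>k<n. c $ gc k * u $ gu k)"
      by (rule sum.cong) (use bc in \<open>auto simp: \<pi>_def bij_betw_def\<close>)
    finally show ?thesis .
  qed
  have ix: "inner c x = (\<Sum>k<n. c $ gc k * x $ gc k)"
  proof -
    have "inner c x = (\<Sum>i\<in>UNIV. c $ i * x $ i)" by (simp add: inner_vec_def)
    also have "\<dots> = (\<Sum>k<n. c $ gc k * x $ gc k)"
      using sum.reindex_bij_betw[OF bc, of "\<lambda>i. c $ i * x $ i"] by simp
    finally show ?thesis .
  qed
  define d where "d k = c $ gc (min k (n - 1))" for k
  have dk: "d k = c $ gc k" if "k < n" for k using that by (simp add: d_def)
  have dm: "\<forall>k l. k \<le> l \<longrightarrow> d l \<le> d k"
    using mc n0 unfolding d_def by (auto simp: min_def)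
  have Tmaj: "(\<Sum>i=1..m. largest x i) \<le> (\<Sum>i=1..m. largest u i)" if "m \<le> n" for m
  proof -
    have "m = 0 \<or> m = n \<or> (1 \<le> m \<and> m < n)" using that by linarith
    then consider "m = 0" | "m = n" | "1 \<le> m" "m < n" by blast
    then show ?thesis
    proof cases
      case 1 then show ?thesis by simp
    next
      case 2 then show ?thesis using maj unfolding majorizes_def n_def by simp
    next
      case 3 then show ?thesis using maj unfolding majorizes_def n_def by simp
    qed
  qed
  have ps: "\<forall>m\<le>n. (\<Sum>k<m. x $ gc k) \<le> (\<Sum>k<m. u $ gu k)"
  proof (intro allI impI)
    fix m assume mn: "m \<le> n"
    have inj: "inj_on gc {..<m}" using bc mn by (auto simp: bij_betw_def intro: inj_on_subset)
    have "(\<Sum>k<m. x $ gc k) = (\<Sum>i\<in>gc ` {..<m}. x $ i)"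
      using sum.reindex[OF inj, of "\<lambda>i. x $ i"] by simp
    also have "\<dots> \<le> (\<Sum>i=1..m. largest x i)"
      by (rule topsum_bound) (simp add: card_image[OF inj])
    also have "\<dots> \<le> (\<Sum>i=1..m. largest u i)" using Tmaj mn by blast
    also have "\<dots> = (\<Sum>k<m. u $ gu k)" using Tu mn by blast
    finally show "(\<Sum>k<m. x $ gc k) \<le> (\<Sum>k<m. u $ gu k)" .
  qed
  have tot: "(\<Sum>k<n. x $ gc k) = (\<Sum>k<n. u $ gu k)"
  proof -
    have "(\<Sum>k<n. x $ gc k) = (\<Sum>i\<in>UNIV. x $ i)"
      using sum.reindex_bij_betw[OF bc, of "\<lambda>i. x $ i"] by simp
    also have "\<dots> = (\<Sum>i=1..n. largest x i)" using topsum_total[of x] unfolding n_def by simp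
    also have "\<dots> = (\<Sum>i=1..n. largest u i)" using maj unfolding majorizes_def n_def by simp
    also have "\<dots> = (\<Sum>k<n. u $ gu k)" using Tu by blast
    finally show ?thesis .
  qed
  have "(\<Sum>k<n. d k * x $ gc k) \<le> (\<Sum>k<n. d k * u $ gu k)"
    by (rule abel[OF dm ps tot])
  then have "inner c x \<le> inner c p" unfolding ix ip using dk by simp
  then show False using lt by simp
qed

lemma T_sorted:
  fixes v :: "real^'n::{finite,linorder}"
  assumes "\<forall>i j. i \<le> j \<longrightarrow> v $ j \<le> v $ i" "j \<le> CARD('n)"
  shows "(\<Sum>i=1..j. largest v i) = (\<Sum>k<j. v $ ((sl::'n list) ! k))"
proof -
  have "(\<Sum>i=1..j. largest v i) = (\<Sum>i=1..j. v $ ((sl::'n list) ! (i - 1)))"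
    by (rule sum.cong) (use assms in \<open>auto simp: largest_def decr_sorted sl_len\<close>)
  then show ?thesis using sum_shift1[of "\<lambda>k. v $ ((sl::'n list) ! k)" j] by simp
qed

lemma largest_perm:
  assumes "\<pi> permutes (UNIV::'n::finite set)"
  shows "largest (\<chi> i. x $ \<pi> i) = largest (x::real^'n)"
  using decr_perm[OF assms] by (simp add: largest_def fun_eq_iff)

lemma maj_combo:
  fixes X :: "'a \<Rightarrow> real^'n::{finite,linorder}"
  assumes fs: "finite s" and w: "\<forall>v\<in>s. 0 \<le> w v"
    and pv: "\<forall>v\<in>s. \<pi> v permutes (UNIV::'n set) \<and> (\<forall>i j. i \<le> j \<longrightarrow> X v $ \<pi> v j \<le> X v $ \<pi> v i)"
  shows "majorizes (\<Sum>v\<in>s. w v *\<^sub>R (\<chi> i. X v $ \<pi> v i)) (\<Sum>v\<in>s. w v *\<^sub>R X v)"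
proof -
  define Y where "Y v = (\<chi> i. X v $ \<pi> v i)" for v
  define u where "u = (\<Sum>v\<in>s. w v *\<^sub>R Y v)"
  define x where "x = (\<Sum>v\<in>s. w v *\<^sub>R X v)"
  have Ys: "\<forall>i j. i \<le> j \<longrightarrow> Y v $ j \<le> Y v $ i" if "v \<in> s" for v
    using pv that by (simp add: Y_def)
  have LY: "largest (Y v) = largest (X v)" if "v \<in> s" for v
    unfolding Y_def by (rule largest_perm) (use pv that in blast)
  have ineq: "(\<Sum>i=1..j. largest x i) \<le> (\<Sum>i=1..j. largest u i)" if jn: "j \<le> CARD('n)" for j
  proof -
    obtain g where bg: "bij_betw g {..<CARD('n)} (UNIV::'n set)"
      and T: "\<forall>j\<le>CARD('n). (\<Sum>i=1..j. largest x i) = (\<Sum>k<j. x $ g k)"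
      using sort_bij[of x] by blast
    have inj: "inj_on g {..<j}" using bg jn by (auto simp: bij_betw_def intro: inj_on_subset)
    have injs: "inj_on ((!) (sl::'n list)) {..<j}" using sl_bij[where 'n='n] jn by (auto simp: bij_betw_def intro: inj_on_subset)
    have "(\<Sum>i=1..j. largest x i) = (\<Sum>i\<in>g ` {..<j}. x $ i)"
      using T jn sum.reindex[OF inj, of "\<lambda>i. x $ i"] by simp
    also have "\<dots> = (\<Sum>v\<in>s. w v * (\<Sum>i\<in>g ` {..<j}. X v $ i))"
      unfolding x_def by (simp add: sum_distrib_left sum.swap[of _ "g ` {..<j}"])
    also have "\<dots> \<le> (\<Sum>v\<in>s. w v * (\<Sum>k<j. Y v $ ((sl::'n list) ! k)))"
    proof (rule sum_mono)
      fix v assume vs: "v \<in> s"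
      have "(\<Sum>i\<in>g ` {..<j}. X v $ i) \<le> (\<Sum>i=1..j. largest (X v) i)"
        by (rule topsum_bound) (simp add: card_image[OF inj])
      also have "\<dots> = (\<Sum>k<j. Y v $ ((sl::'n list) ! k))"
        using LY[OF vs] T_sorted[OF Ys[OF vs] jn] by simp
      finally show "w v * (\<Sum>i\<in>g ` {..<j}. X v $ i) \<le> w v * (\<Sum>k<j. Y v $ ((sl::'n list) ! k))"
        using w vs by (simp add: mult_left_mono)
    qed
    also have "\<dots> = (\<Sum>k<j. u $ ((sl::'n list) ! k))"
      unfolding u_def by (simp add: sum_distrib_left sum.swap[of _ "{..<j}"])
    also have "\<dots> = (\<Sum>i\<in>(!) (sl::'n list) ` {..<j}. u $ i)"
      using sum.reindex[OF injs, of "\<lambda>i. u $ i"] by simp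
    also have "\<dots> \<le> (\<Sum>i=1..j. largest u i)"
      by (rule topsum_bound) (simp add: card_image[OF injs])
    finally show ?thesis .
  qed
  have eq: "(\<Sum>i=1..CARD('n). largest x i) = (\<Sum>i=1..CARD('n). largest u i)"
  proof -
    have "(\<Sum>i=1..CARD('n). largest x i) = (\<Sum>i\<in>UNIV. x $ i)" by (rule topsum_total)
    also have "\<dots> = (\<Sum>v\<in>s. w v * (\<Sum>i\<in>UNIV. X v $ i))"
      unfolding x_def by (simp add: sum_distrib_left sum.swap[of _ UNIV])
    also have "\<dots> = (\<Sum>v\<in>s. w v * (\<Sum>i\<in>UNIV. Y v $ i))"
    proof (rule sum.cong[OF refl])
      fix v assume vs: "v \<in> s"
      have "(\<Sum>i\<in>UNIV. X v $ i) = (\<Sum>i=1..CARD('n). largest (X v) i)" by (rule topsum_total[symmetric])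
      also have "\<dots> = (\<Sum>i=1..CARD('n). largest (Y v) i)" using LY[OF vs] by simp
      also have "\<dots> = (\<Sum>i\<in>UNIV. Y v $ i)" by (rule topsum_total)
      finally show "w v * (\<Sum>i\<in>UNIV. X v $ i) = w v * (\<Sum>i\<in>UNIV. Y v $ i)" by simp
    qed
    also have "\<dots> = (\<Sum>i\<in>UNIV. u $ i)"
      unfolding u_def by (simp add: sum_distrib_left sum.swap[of _ UNIV])
    also have "\<dots> = (\<Sum>i=1..CARD('n). largest u i)" by (rule topsum_total[symmetric])
    finally show ?thesis .
  qed
  have "majorizes u x" unfolding majorizes_def using ineq eq by auto
  then show ?thesis unfolding u_def x_def Y_def .
qed

theorem theorem1:
  fixes S :: "((real^'n::{finite,linorder}) \<times> 'b::euclidean_space) set"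
  assumes "perm_invariant_x S"
  defines "S0 \<equiv> S \<inter> {(u, z). \<forall>i j. i \<le> j \<longrightarrow> u $ i \<ge> u $ j}"
  shows "convex hull S =
    {(x, z). \<exists>u. (u, z) \<in> convex hull S0 \<and> majorizes u x}"
proof
  have permS: "(\<chi> i. x $ \<pi> i, z) \<in> S" if "(x, z) \<in> S" "\<pi> permutes UNIV" for x z \<pi>
  proof -
    have "is_perm_matrix (perm_matrix \<pi>)" unfolding is_perm_matrix_def using that(2) by blast
    then show ?thesis using assms(1) that(1) unfolding perm_invariant_x_def by (metis perm_mult)
  qed
  show "convex hull S \<subseteq> {(x, z). \<exists>u. (u, z) \<in> convex hull S0 \<and> majorizes u x}"
  proof
    fix y assume "y \<in> convex hull S"
    then obtain s w where fs: "finite s" and sS: "s \<subseteq> S" and w0: "\<forall>v\<in>s. 0 \<le> w v"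
      and w1: "sum w s = 1" and y: "(\<Sum>v\<in>s. w v *\<^sub>R v) = y"
      unfolding convex_hull_explicit by blast
    define ps where "ps x = (SOME \<pi>. \<pi> permutes (UNIV::'n set) \<and> (\<forall>i j. i \<le> j \<longrightarrow> x $ \<pi> j \<le> x $ \<pi> i))"
      for x :: "(real, 'n) vec"
    have psp: "ps (x::(real, 'n) vec) permutes UNIV \<and> (\<forall>i j. i \<le> j \<longrightarrow> x $ ps x j \<le> x $ ps x i)" for x
      unfolding ps_def using someI_ex[OF sort_exists[of x]] by simp
    define q where "q v = ((\<chi> i. fst v $ ps (fst v) i), snd v)" for v :: "(real, 'n) vec \<times> 'b"
    have qS0: "q v \<in> convex hull S0" if "v \<in> s" for v
    proof -
      have "q v \<in> S" unfolding q_def using permS[of "fst v" "snd v" "ps (fst v)"] psp sS that by auto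
      moreover have "q v \<in> {(u, z). \<forall>i j. i \<le> j \<longrightarrow> u $ i \<ge> u $ j}"
        unfolding q_def using psp by simp
      ultimately show ?thesis unfolding S0_def by (simp add: hull_inc)
    qed
    have inS0: "(\<Sum>v\<in>s. w v *\<^sub>R q v) \<in> convex hull S0"
      by (rule convex_sum[OF fs convex_convex_hull w1]) (use w0 qS0 in auto)
    have fq: "fst (\<Sum>v\<in>s. w v *\<^sub>R q v) = (\<Sum>v\<in>s. w v *\<^sub>R (\<chi> i. fst v $ ps (fst v) i))"
      by (simp add: fst_sum q_def)
    have sq: "snd (\<Sum>v\<in>s. w v *\<^sub>R q v) = snd y"
      unfolding y[symmetric] by (simp add: snd_sum q_def)
    have fy: "fst y = (\<Sum>v\<in>s. w v *\<^sub>R fst v)"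
      unfolding y[symmetric] by (simp add: fst_sum)
    have "majorizes (\<Sum>v\<in>s. w v *\<^sub>R (\<chi> i. fst v $ ps (fst v) i)) (\<Sum>v\<in>s. w v *\<^sub>R fst v)"
      by (rule maj_combo[OF fs w0]) (use psp in blast)
    then have "(fst (\<Sum>v\<in>s. w v *\<^sub>R q v), snd y) \<in> convex hull S0 \<and> majorizes (fst (\<Sum>v\<in>s. w v *\<^sub>R q v)) (fst y)"
      using inS0 sq fq fy by (metis prod.collapse)
    then show "y \<in> {(x, z). \<exists>u. (u, z) \<in> convex hull S0 \<and> majorizes u x}"
      by (cases y) auto
  qed
  show "{(x, z). \<exists>u. (u, z) \<in> convex hull S0 \<and> majorizes u x} \<subseteq> convex hull S"
  proof clarify
    fix x z u assume uz: "(u, z) \<in> convex hull S0" and maj: "majorizes u x"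
    define T where "T = (\<lambda>\<pi>. \<chi> i. u $ \<pi> i) ` {\<pi>. \<pi> permutes (UNIV::'n set)}"
    have "T \<times> {z} \<subseteq> convex hull S"
    proof
      fix p assume "p \<in> T \<times> {z}"
      then obtain \<pi> where pp: "\<pi> permutes UNIV" and pe: "p = (\<chi> i. u $ \<pi> i, z)"
        unfolding T_def by auto
      define f where "f = (\<lambda>p::(real, 'n) vec \<times> 'b. ((\<chi> i. fst p $ \<pi> i), snd p))"
      have lf: "linear f" unfolding f_def by (rule linearI) (auto simp: vec_eq_iff)
      have "f ` S \<subseteq> S" unfolding f_def using permS[OF _ pp] by auto
      then have h1: "convex hull (f ` S) \<subseteq> convex hull S" by (rule hull_mono)
      have "(u, z) \<in> convex hull S" using uz hull_mono[of S0 S] unfolding S0_def by auto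
      then have "f (u, z) \<in> convex hull (f ` S)" using in_convex_hull_linear_image[OF lf] by blast
      with h1 show "p \<in> convex hull S" unfolding f_def pe by auto
    qed
    then have "convex hull (T \<times> {z}) \<subseteq> convex hull S"
      by (simp add: convex_convex_hull hull_minimal)
    moreover have "x \<in> convex hull T" unfolding T_def by (rule rado[OF maj])
    ultimately show "(x, z) \<in> convex hull S" by (auto simp: convex_hull_Times)
  qed
qed

end
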